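(* Under the setting of the context, for every $\boldsymbol{\alpha}\in\mathbb{R}^n$ and $\boldsymbol{\beta}\in\mathbb{R}^{dn}$, the function $$f_{\boldsymbol{\alpha},\boldsymbol{\beta}}=\sum_{i=1}^n\alpha_i k_{\mathbf{x}^i}+\sum_{i=1}^n\sum_{a=1}^d\beta_{ai}[\partial_a k_{\mathbf{x}^i}]$$ satisfies $\widehat{\mathcal{L}}(f_{\boldsymbol{\alpha},\boldsymbol{\beta}})=\mathcal{J}_1(\boldsymbol{\alpha},\boldsymbol{\beta})$, $\widehat{\mathcal{R}}(f_{\boldsymbol{\alpha},\boldsymbol{\beta}})=\mathcal{J}_2(\boldsymbol{\alpha},\boldsymbol{\beta})$ and $\|f_{\boldsymbol{\alpha},\boldsymbol{\beta}}\|_{\mathcal{F}}^2=\mathcal{J}_3(\boldsymbol{\alpha},\boldsymbol{\beta})$, where $$\mathcal{J}_1=\tfrac1n\|\mathbf{y}-\mathbf{K}\boldsymbol{\alpha}-\mathbf{D}^T\boldsymbol{\beta}\|_2^2,\qquad \mathcal{J}_3=\boldsymbol{\alpha}^T\mathbf{K}\boldsymbol{\alpha}+2\boldsymbol{\alpha}^T\mathbf{D}^T\boldsymbol{\beta}+\boldsymbol{\beta}^T\mathbf{L}\boldsymbol{\beta},$$ and $\mathcal{J}_2$ depends on the regularizer: for $\widehat{\mathcal{R}}^L$: $\mathcal{J}_2=\frac1{\sqrt n}\sum_{a=1}^d\|\mathbf{D}^a\boldsymbol{\alpha}+\mathbf{L}^a\boldsymbol{\beta}\|_2$; for $\widehat{\mathcal{R}}^{GL}$: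 $\mathcal{J}_2=\frac1{\sqrt n}\sum_{g=1}^G p_g\|\ddot{\mathbf{D}}^g\boldsymbol{\alpha}+\ddot{\mathbf{L}}^g\boldsymbol{\beta}\|_2$; for $\widehat{\mathcal{R}}^{EN}$: $\mathcal{J}_2=\frac{\mu}{\sqrt n}\sum_{a=1}^d\|\mathbf{D}^a\boldsymbol{\alpha}+\mathbf{L}^a\boldsymbol{\beta}\|_2+\frac{1-\mu}{n}\sum_{a=1}^d\|\mathbf{D}^a\boldsymbol{\alpha}+\mathbf{L}^a\boldsymbol{\beta}\|_2^2$. Consequently the problem $\min_{f\in\mathcal{F}}\widehat{\mathcal{L}}(f)+\tau\widehat{\mathcal{R}}(f)+\nu\|f\|_{\mathcal{F}}^2$ ($\tau,\nu\ge0$) is equivalent to $\min_{\boldsymbol{\alpha},\boldsymbol{\beta}}\mathcal{J}_1+\tau\mathcal{J}_2+\nu\mathcal{J}_3$: both have the same infimum, and $(\boldsymbol{\alpha}^*,\boldsymbol{\beta}^* )$ minimises the latter if and only if $f_{\boldsymbol{\alpha}^*,\boldsymbol{\beta}^*}$ minimises the former.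
   Context: Setting: $\mathcal{X}\subseteq\mathbb{R}^d$ open; $k$ a symmetric positive semidefinite kernel in $C^2(\mathcal{X}\times\mathcal{X})$ with RKHS $\mathcal{F}$; $k_{\mathbf{x}}(\mathbf{x}')=k(\mathbf{x},\mathbf{x}')$; $[\partial_a k_{\mathbf{x}}](\mathbf{x}')=\frac{\partial}{\partial x_a}k(\mathbf{x},\mathbf{x}')$ (derivative in the first argument). These satisfy $\langle k_{\mathbf{x}},f\rangle_{\mathcal{F}}=f(\mathbf{x})$, $[\partial_a k_{\mathbf{x}}]\in\mathcal{F}$, $\langle[\partial_a k_{\mathbf{x}}],f\rangle_{\mathcal{F}}=\partial_a f(\mathbf{x})$. Data $(\mathbf{x}^i,y^i)\in\mathcal{X}\times\mathbb{R}$, $i=1,\dots,n$, $\mathbf{y}=(y^1,\dots,y^n)^T$. Loss and regularizers: $\widehat{\mathcal{L}}(f)=\frac1n\sum_i(y^i-f(\mathbf{x}^i))^2$; $\|\partial_a f\|_{2_n}=\sqrt{\frac1n\sum_i|\partial_a f(\mathbf{x}^i)|^2}$; $\widehat{\mathcal{R}}^L(f)=\sum_a\|\partial_a f\|_{2_n}$; for a partition of $\{1,\dots,d\}$ into groups $g=1,\dots,G$ with $p_g$ elements, $\widehat{\mathcal{R}}^{GL}(f)=\sum_g p_g\sqrt{\sum_{a\in g}\|\partial_af\|_{2_n}^2}$; for $\mu\in[0,1]$, $\widehat{\mathcal{R}}^{EN}(f)=\mu\sum_a\|\partial_af\|_{2_n}+(1-\mu)\sum_a\|\partial_af\|_{2_n}^2$.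 Matrices: $\boldsymbol{\alpha}=(\alpha_1,\dots,\alpha_n)^T$; $\boldsymbol{\beta}=(\beta_{11},\dots,\beta_{1n},\beta_{21},\dots,\beta_{dn})^T$. $\mathbf{K}\in\mathbb{R}^{n\times n}$, $K_{ij}=k(\mathbf{x}^i,\mathbf{x}^j)$. $\mathbf{D}^a\in\mathbb{R}^{n\times n}$, $D^a_{ij}=[\partial_a k_{\mathbf{x}^i}](\mathbf{x}^j)$. $\mathbf{L}^{ab}\in\mathbb{R}^{n\times n}$, $L^{ab}_{ij}=\frac{\partial^2}{\partial s_a\partial r_b}k(\mathbf{s},\mathbf{r})\big|_{\mathbf{s}=\mathbf{x}^i,\mathbf{r}=\mathbf{x}^j}$. $\mathbf{D}\in\mathbb{R}^{dn\times n}$ is the vertical stack of $\mathbf{D}^1,\dots,\mathbf{D}^d$; $\mathbf{L}^a=[\mathbf{L}^{a1}\cdots\mathbf{L}^{ad}]\in\mathbb{R}^{n\times dn}$; $\mathbf{L}\in\mathbb{R}^{dn\times dn}$ is the vertical stack of $\mathbf{L}^1,\dots,\mathbf{L}^d$. For a group $g=\{g_1,\dots,g_{p_g}\}$, $\ddot{\mathbf{D}}^g$ is the vertical stack of $\mathbf{D}^{g_1},\dots,\mathbf{D}^{g_{p_g}}$ and $\ddot{\mathbf{L}}^g$ the vertical stack of $\mathbf{L}^{g_1},\dots,\mathbf{L}^{g_{p_g}}$. *)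

theory Defs
  imports "HOL-Analysis.Analysis" "HOL-Library.Disjoint_Sets"
begin

text \<open>Coordinates of \<open>\<real>^d\<close> are indexed by a finite type \<open>'d\<close>; data points are indexed by
  \<open>i < n\<close>; \<open>\<alpha> :: nat \<Rightarrow> real\<close> (entries \<open>i < n\<close>), \<open>\<beta> :: 'd \<Rightarrow> nat \<Rightarrow> real\<close> with \<open>\<beta> a i = \<beta>_{ai}\<close>.\<close>

definition partial :: "'d::finite \<Rightarrow> (real^'d \<Rightarrow> real) \<Rightarrow> real^'d \<Rightarrow> real" where
  "partial a g x = deriv (\<lambda>t. g (x + t *\<^sub>R axis a 1)) 0"

definition C2_on :: "'a::real_normed_vector set \<Rightarrow> ('a \<Rightarrow> real) \<Rightarrow> bool" where
  "C2_on S g \<longleftrightarrow> (\<exists>(g' :: 'a \<Rightarrow> 'a \<Rightarrow>\<^sub>L real) (g'' :: 'a \<Rightarrow> 'a \<Rightarrow>\<^sub>L ('a \<Rightarrow>\<^sub>L real)).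
      (\<forall>z\<in>S. (g has_derivative blinfun_apply (g' z)) (at z)) \<and>
      (\<forall>z\<in>S. (g' has_derivative blinfun_apply (g'' z)) (at z)) \<and>
      continuous_on S g'')"

definition sym_psd_kernel :: "'a set \<Rightarrow> ('a \<Rightarrow> 'a \<Rightarrow> real) \<Rightarrow> bool" where
  "sym_psd_kernel X k \<longleftrightarrow> (\<forall>s\<in>X. \<forall>r\<in>X. k s r = k r s) \<and>
     (\<forall>(m::nat) (z::nat \<Rightarrow> 'a) (c::nat \<Rightarrow> real). (\<forall>i<m. z i \<in> X) \<longrightarrow>
        0 \<le> (\<Sum>i<m. \<Sum>j<m. c i * c j * k (z i) (z j)))"

text \<open>The RKHS \<open>\<F>\<close> of \<open>k\<close> is modelled as a Hilbert space type \<open>'h\<close> whose elements are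
  identified (injectively) with functions on \<open>X\<close> via \<open>ev\<close>; \<open>kx x = k_x\<close>, \<open>dk a x = \<partial>_a k_x\<close>.\<close>
definition is_rkhs :: "(real^'d::finite) set \<Rightarrow> (real^'d \<Rightarrow> real^'d \<Rightarrow> real)
    \<Rightarrow> ('h::real_inner \<Rightarrow> real^'d \<Rightarrow> real) \<Rightarrow> (real^'d \<Rightarrow> 'h) \<Rightarrow> ('d \<Rightarrow> real^'d \<Rightarrow> 'h) \<Rightarrow> bool" where
  "is_rkhs X k ev kx dk \<longleftrightarrow>
     (\<forall>f g. (\<forall>x\<in>X. ev f x = ev g x) \<longrightarrow> f = g) \<and>
     (\<forall>x\<in>X. \<forall>x'\<in>X. ev (kx x) x' = k x x') \<and>
     (\<forall>x\<in>X. \<forall>f. inner (kx x) f = ev f x) \<and>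
     (\<forall>a. \<forall>x\<in>X. \<forall>x'\<in>X. ev (dk a x) x' = partial a (\<lambda>s. k s x') x) \<and>
     (\<forall>a. \<forall>x\<in>X. \<forall>f. inner (dk a x) f = partial a (ev f) x)"

definition f_ab :: "(real^'d::finite \<Rightarrow> 'h::real_vector) \<Rightarrow> ('d \<Rightarrow> real^'d \<Rightarrow> 'h) \<Rightarrow> nat
    \<Rightarrow> (nat \<Rightarrow> real^'d) \<Rightarrow> (nat \<Rightarrow> real) \<Rightarrow> ('d \<Rightarrow> nat \<Rightarrow> real) \<Rightarrow> 'h" where
  "f_ab kx dk n xs \<alpha> \<beta> = (\<Sum>i<n. \<alpha> i *\<^sub>R kx (xs i)) + (\<Sum>i<n. \<Sum>a\<in>UNIV. \<beta> a i *\<^sub>R dk a (xs i))"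

definition emp_loss :: "('h \<Rightarrow> real^'d \<Rightarrow> real) \<Rightarrow> nat \<Rightarrow> (nat \<Rightarrow> real^'d) \<Rightarrow> (nat \<Rightarrow> real) \<Rightarrow> 'h \<Rightarrow> real" where
  "emp_loss ev n xs ys f = (\<Sum>i<n. (ys i - ev f (xs i))^2) / real n"

definition emp_pnorm :: "('h \<Rightarrow> real^'d::finite \<Rightarrow> real) \<Rightarrow> nat \<Rightarrow> (nat \<Rightarrow> real^'d) \<Rightarrow> 'd \<Rightarrow> 'h \<Rightarrow> real" where
  "emp_pnorm ev n xs a f = sqrt ((\<Sum>i<n. (partial a (ev f) (xs i))^2) / real n)"

definition R_L :: "('h \<Rightarrow> real^'d::finite \<Rightarrow> real) \<Rightarrow> nat \<Rightarrow> (nat \<Rightarrow> real^'d) \<Rightarrow> 'h \<Rightarrow> real" where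
  "R_L ev n xs f = (\<Sum>a\<in>UNIV. emp_pnorm ev n xs a f)"

definition R_GL :: "('h \<Rightarrow> real^'d::finite \<Rightarrow> real) \<Rightarrow> nat \<Rightarrow> (nat \<Rightarrow> real^'d) \<Rightarrow> 'd set set \<Rightarrow> 'h \<Rightarrow> real" where
  "R_GL ev n xs P f = (\<Sum>g\<in>P. real (card g) * sqrt (\<Sum>a\<in>g. (emp_pnorm ev n xs a f)^2))"

definition R_EN :: "('h \<Rightarrow> real^'d::finite \<Rightarrow> real) \<Rightarrow> nat \<Rightarrow> (nat \<Rightarrow> real^'d) \<Rightarrow> real \<Rightarrow> 'h \<Rightarrow> real" where
  "R_EN ev n xs \<mu> f = \<mu> * (\<Sum>a\<in>UNIV. emp_pnorm ev n xs a f) + (1 - \<mu>) * (\<Sum>a\<in>UNIV. (emp_pnorm ev n xs a f)^2)"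

text \<open>Matrix entries (indices from 0).\<close>
definition Kmat :: "('x \<Rightarrow> 'x \<Rightarrow> real) \<Rightarrow> (nat \<Rightarrow> 'x) \<Rightarrow> nat \<Rightarrow> nat \<Rightarrow> real" where
  "Kmat k xs i j = k (xs i) (xs j)"

definition Dmat :: "(real^'d::finite \<Rightarrow> real^'d \<Rightarrow> real) \<Rightarrow> (nat \<Rightarrow> real^'d) \<Rightarrow> 'd \<Rightarrow> nat \<Rightarrow> nat \<Rightarrow> real" where
  "Dmat k xs a i j = partial a (\<lambda>s. k s (xs j)) (xs i)"

definition Lmat :: "(real^'d::finite \<Rightarrow> real^'d \<Rightarrow> real) \<Rightarrow> (nat \<Rightarrow> real^'d) \<Rightarrow> 'd \<Rightarrow> 'd \<Rightarrow> nat \<Rightarrow> nat \<Rightarrow> real" where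
  "Lmat k xs a b i j = partial a (\<lambda>s. partial b (\<lambda>r. k s r) (xs j)) (xs i)"

definition J1 :: "(real^'d::finite \<Rightarrow> real^'d \<Rightarrow> real) \<Rightarrow> nat \<Rightarrow> (nat \<Rightarrow> real^'d) \<Rightarrow> (nat \<Rightarrow> real)
    \<Rightarrow> (nat \<Rightarrow> real) \<Rightarrow> ('d \<Rightarrow> nat \<Rightarrow> real) \<Rightarrow> real" where
  "J1 k n xs ys \<alpha> \<beta> = (\<Sum>j<n. (ys j - (\<Sum>i<n. Kmat k xs j i * \<alpha> i)
       - (\<Sum>a\<in>UNIV. \<Sum>i<n. Dmat k xs a i j * \<beta> a i))^2) / real n"

definition J3 :: "(real^'d::finite \<Rightarrow> real^'d \<Rightarrow> real) \<Rightarrow> nat \<Rightarrow> (nat \<Rightarrow> real^'d)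
    \<Rightarrow> (nat \<Rightarrow> real) \<Rightarrow> ('d \<Rightarrow> nat \<Rightarrow> real) \<Rightarrow> real" where
  "J3 k n xs \<alpha> \<beta> = (\<Sum>i<n. \<Sum>j<n. \<alpha> i * Kmat k xs i j * \<alpha> j)
     + 2 * (\<Sum>a\<in>UNIV. \<Sum>i<n. (\<Sum>j<n. Dmat k xs a i j * \<alpha> j) * \<beta> a i)
     + (\<Sum>a\<in>UNIV. \<Sum>i<n. \<Sum>b\<in>UNIV. \<Sum>j<n. \<beta> a i * Lmat k xs a b i j * \<beta> b j)"

definition gradvec :: "(real^'d::finite \<Rightarrow> real^'d \<Rightarrow> real) \<Rightarrow> nat \<Rightarrow> (nat \<Rightarrow> real^'d)
    \<Rightarrow> (nat \<Rightarrow> real) \<Rightarrow> ('d \<Rightarrow> nat \<Rightarrow> real) \<Rightarrow> 'd \<Rightarrow> nat \<Rightarrow> real" where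
  "gradvec k n xs \<alpha> \<beta> a j = (\<Sum>i<n. Dmat k xs a j i * \<alpha> i) + (\<Sum>b\<in>UNIV. \<Sum>i<n. Lmat k xs a b j i * \<beta> b i)"

definition gnorm :: "(real^'d::finite \<Rightarrow> real^'d \<Rightarrow> real) \<Rightarrow> nat \<Rightarrow> (nat \<Rightarrow> real^'d)
    \<Rightarrow> (nat \<Rightarrow> real) \<Rightarrow> ('d \<Rightarrow> nat \<Rightarrow> real) \<Rightarrow> 'd \<Rightarrow> real" where
  "gnorm k n xs \<alpha> \<beta> a = sqrt (\<Sum>j<n. (gradvec k n xs \<alpha> \<beta> a j)^2)"

definition J2_L :: "(real^'d::finite \<Rightarrow> real^'d \<Rightarrow> real) \<Rightarrow> nat \<Rightarrow> (nat \<Rightarrow> real^'d)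
    \<Rightarrow> (nat \<Rightarrow> real) \<Rightarrow> ('d \<Rightarrow> nat \<Rightarrow> real) \<Rightarrow> real" where
  "J2_L k n xs \<alpha> \<beta> = (1 / sqrt (real n)) * (\<Sum>a\<in>UNIV. gnorm k n xs \<alpha> \<beta> a)"

text \<open>\<open>\<parallel>\<ddot>D^g \<alpha> + \<ddot>L^g \<beta>\<parallel>_2\<close> is the Euclidean norm of the stacked vectors \<open>D^a \<alpha> + L^a \<beta>\<close>, \<open>a \<in> g\<close>.\<close>
definition J2_GL :: "(real^'d::finite \<Rightarrow> real^'d \<Rightarrow> real) \<Rightarrow> nat \<Rightarrow> (nat \<Rightarrow> real^'d) \<Rightarrow> 'd set set
    \<Rightarrow> (nat \<Rightarrow> real) \<Rightarrow> ('d \<Rightarrow> nat \<Rightarrow> real) \<Rightarrow> real" where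
  "J2_GL k n xs P \<alpha> \<beta> = (1 / sqrt (real n)) *
     (\<Sum>g\<in>P. real (card g) * sqrt (\<Sum>a\<in>g. \<Sum>j<n. (gradvec k n xs \<alpha> \<beta> a j)^2))"

definition J2_EN :: "(real^'d::finite \<Rightarrow> real^'d \<Rightarrow> real) \<Rightarrow> nat \<Rightarrow> (nat \<Rightarrow> real^'d) \<Rightarrow> real
    \<Rightarrow> (nat \<Rightarrow> real) \<Rightarrow> ('d \<Rightarrow> nat \<Rightarrow> real) \<Rightarrow> real" where
  "J2_EN k n xs \<mu> \<alpha> \<beta> = (\<mu> / sqrt (real n)) * (\<Sum>a\<in>UNIV. gnorm k n xs \<alpha> \<beta> a)
     + ((1 - \<mu>) / real n) * (\<Sum>a\<in>UNIV. (gnorm k n xs \<alpha> \<beta> a)^2)"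

definition equivalent_problems :: "('h \<Rightarrow> real) \<Rightarrow> ('p \<Rightarrow> 'q \<Rightarrow> real) \<Rightarrow> ('p \<Rightarrow> 'q \<Rightarrow> 'h) \<Rightarrow> bool" where
  "equivalent_problems P Q emb \<longleftrightarrow>
     (INF f. P f) = (INF pq. Q (fst pq) (snd pq)) \<and>
     (\<forall>\<alpha> \<beta>. (\<forall>\<alpha>' \<beta>'. Q \<alpha> \<beta> \<le> Q \<alpha>' \<beta>') \<longleftrightarrow> (\<forall>g. P (emb \<alpha> \<beta>) \<le> P g))"

end

theory Submission
  imports Defs
begin

lemma orth_span:
  fixes x :: "'h::real_inner"
  assumes "a \<in> span S" "\<And>y. y \<in> S \<Longrightarrow> inner y x = 0"
  shows "inner a x = 0"
  using orthogonal_to_span[OF assms(1), of x] assms(2)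
  by (simp add: orthogonal_def inner_commute)

lemma proj_exists:
  fixes S :: "'h::real_inner set"
  assumes "finite S"
  shows "\<forall>f. \<exists>p\<in>span S. \<forall>s\<in>S. inner s (f - p) = 0"
  using assms
proof (induction S rule: finite_induct)
  case empty
  then show ?case by (auto intro: span_zero)
next
  case (insert v S)
  show ?case
  proof
    fix f
    obtain pv where pv: "pv \<in> span S" "\<forall>s\<in>S. inner s (v - pv) = 0" using insert.IH by blast
    obtain pf where pf: "pf \<in> span S" "\<forall>s\<in>S. inner s (f - pf) = 0" using insert.IH by blast
    define w where "w = v - pv"
    have wS: "inner s w = 0" if "s \<in> span S" for s
      using orth_span[OF that] pv(2) w_def by auto
    define c where "c = inner w f / inner w w"
    define p where "p = pf + c *\<^sub>R w"
    have pspan: "p \<in> span (insert v S)"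
    proof -
      have "pf \<in> span (insert v S)" "pv \<in> span (insert v S)"
        using pf(1) pv(1) span_mono[of S "insert v S"] by auto
      moreover have "v \<in> span (insert v S)" by (simp add: span_base)
      ultimately show ?thesis unfolding p_def w_def
        by (intro span_add span_scale span_diff)
    qed
    have oS: "inner s (f - p) = 0" if "s \<in> span S" for s
    proof -
      have "inner s (f - pf) = 0" using orth_span[OF that] pf(2) by auto
      moreover have "inner s w = 0" using wS[OF that] .
      ultimately show ?thesis unfolding p_def
        by (simp add: inner_diff_right inner_add_right)
    qed
    have ow: "inner w (f - p) = 0"
    proof (cases "inner w w = 0")
      case True
      then have "w = 0" by simp
      then show ?thesis by simp
    next
      case False
      have "inner w pf = 0" using wS[OF pf(1)] by (simp add: inner_commute)
      then show ?thesis using False unfolding p_def c_def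
        by (simp add: inner_diff_right inner_add_right)
    qed
    have "inner v (f - p) = 0"
    proof -
      have "v = w + pv" by (simp add: w_def)
      then have "inner v (f - p) = inner w (f - p) + inner pv (f - p)"
        by (simp add: inner_add_left)
      then show ?thesis using ow oS[OF pv(1)] by simp
    qed
    moreover have "\<forall>s\<in>S. inner s (f - p) = 0" using oS span_base by blast
    ultimately show "\<exists>p\<in>span (insert v S). \<forall>s\<in>insert v S. inner s (f - p) = 0"
      using pspan by blast
  qed
qed

lemma partial_local:
  assumes "open X" "x \<in> X" "\<And>y. y \<in> X \<Longrightarrow> g y = h y"
  shows "partial a g x = partial a h x"
  unfolding partial_def
proof (rule deriv_cong_ev[OF _ refl])
  have "((\<lambda>t::real. x + t *\<^sub>R axis a 1) \<longlongrightarrow> x + 0 *\<^sub>R axis a 1) (nhds 0)"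
    by (intro tendsto_intros filterlim_ident)
  then have "((\<lambda>t::real. x + t *\<^sub>R axis a 1) \<longlongrightarrow> x) (nhds 0)" by simp
  then have "\<forall>\<^sub>F t in nhds 0. x + t *\<^sub>R axis a 1 \<in> X"
    using topological_tendstoD assms(1,2) by blast
  then show "\<forall>\<^sub>F t in nhds 0. g (x + t *\<^sub>R axis a 1) = h (x + t *\<^sub>R axis a 1)"
    by eventually_elim (simp add: assms(3))
qed

lemma basic_facts:
  assumes X: "open X" and sk: "sym_psd_kernel X k" and rk: "is_rkhs X k ev kx dk"
    and xs: "\<forall>i<(n::nat). xs i \<in> X" and i: "i < n" and j: "j < n"
  shows "inner (kx (xs i)) (kx (xs j)) = Kmat k xs i j"
    and "inner (kx (xs j)) (dk a (xs i)) = Dmat k xs a i j"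
    and "inner (dk a (xs i)) (dk b (xs j)) = Lmat k xs a b i j"
proof -
  have xi: "xs i \<in> X" and xj: "xs j \<in> X" using xs i j by auto
  have sym: "\<And>s r. s \<in> X \<Longrightarrow> r \<in> X \<Longrightarrow> k s r = k r s" using sk by (auto simp: sym_psd_kernel_def)
  have E1: "\<And>x f. x \<in> X \<Longrightarrow> inner (kx x) f = ev f x"
   and E0: "\<And>x x'. x \<in> X \<Longrightarrow> x' \<in> X \<Longrightarrow> ev (kx x) x' = k x x'"
   and E2: "\<And>a x x'. x \<in> X \<Longrightarrow> x' \<in> X \<Longrightarrow> ev (dk a x) x' = partial a (\<lambda>s. k s x') x"
   and E3: "\<And>a x f. x \<in> X \<Longrightarrow> inner (dk a x) f = partial a (ev f) x"
    using rk by (auto simp: is_rkhs_def)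
  show "inner (kx (xs i)) (kx (xs j)) = Kmat k xs i j"
    using E1[OF xi] E0[OF xj xi] sym[OF xi xj] by (simp add: Kmat_def)
  show "inner (kx (xs j)) (dk a (xs i)) = Dmat k xs a i j"
    using E1[OF xj] E2[OF xi xj] by (simp add: Dmat_def)
  have "inner (dk a (xs i)) (dk b (xs j)) = partial a (ev (dk b (xs j))) (xs i)"
    using E3[OF xi] by simp
  also have "\<dots> = partial a (\<lambda>s. partial b (\<lambda>r. k s r) (xs j)) (xs i)"
  proof (rule partial_local[OF X xi])
    fix y assume y: "y \<in> X"
    have "ev (dk b (xs j)) y = partial b (\<lambda>s. k s y) (xs j)" using E2[OF xj y] .
    also have "\<dots> = partial b (\<lambda>r. k y r) (xs j)"
      by (rule partial_local[OF X xj]) (use sym y in auto)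
    finally show "ev (dk b (xs j)) y = partial b (\<lambda>r. k y r) (xs j)" .
  qed
  finally show "inner (dk a (xs i)) (dk b (xs j)) = Lmat k xs a b i j" by (simp add: Lmat_def)
qed

lemma eval_facts:
  assumes X: "open X" and sk: "sym_psd_kernel X k" and rk: "is_rkhs X k ev kx dk"
    and xs: "\<forall>i<(n::nat). xs i \<in> X" and j: "j < n"
  shows "ev (f_ab kx dk n xs \<alpha> \<beta>) (xs j) = (\<Sum>i<n. Kmat k xs j i * \<alpha> i) + (\<Sum>a\<in>UNIV. \<Sum>i<n. Dmat k xs a i j * \<beta> a i)"
    and "partial a (ev (f_ab kx dk n xs \<alpha> \<beta>)) (xs j) = gradvec k n xs \<alpha> \<beta> a j"
proof -
  note bf = basic_facts[OF X sk rk xs]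
  have xj: "xs j \<in> X" using xs j by auto
  have E1: "\<And>x f. x \<in> X \<Longrightarrow> inner (kx x) f = ev f x"
   and E3: "\<And>a x f. x \<in> X \<Longrightarrow> inner (dk a x) f = partial a (ev f) x"
    using rk by (auto simp: is_rkhs_def)
  have "ev (f_ab kx dk n xs \<alpha> \<beta>) (xs j) = inner (kx (xs j)) (f_ab kx dk n xs \<alpha> \<beta>)"
    using E1[OF xj] by simp
  also have "\<dots> = (\<Sum>i<n. \<alpha> i * inner (kx (xs j)) (kx (xs i))) + (\<Sum>i<n. \<Sum>a\<in>UNIV. \<beta> a i * inner (kx (xs j)) (dk a (xs i)))"
    by (simp add: f_ab_def inner_add_right inner_sum_right)
  also have "\<dots> = (\<Sum>i<n. Kmat k xs j i * \<alpha> i) + (\<Sum>i<n. \<Sum>a\<in>UNIV. Dmat k xs a i j * \<beta> a i)"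
    by (intro arg_cong2[where f="(+)"] sum.cong refl) (simp_all add: bf j)
  also have "\<dots> = (\<Sum>i<n. Kmat k xs j i * \<alpha> i) + (\<Sum>a\<in>UNIV. \<Sum>i<n. Dmat k xs a i j * \<beta> a i)"
    using sum.swap[of "\<lambda>i a. Dmat k xs a i j * \<beta> a i" UNIV "{..<n}"] by simp
  finally show "ev (f_ab kx dk n xs \<alpha> \<beta>) (xs j) = (\<Sum>i<n. Kmat k xs j i * \<alpha> i) + (\<Sum>a\<in>UNIV. \<Sum>i<n. Dmat k xs a i j * \<beta> a i)" .
  have "partial a (ev (f_ab kx dk n xs \<alpha> \<beta>)) (xs j) = inner (dk a (xs j)) (f_ab kx dk n xs \<alpha> \<beta>)"
    using E3[OF xj] by simp
  also have "\<dots> = (\<Sum>i<n. \<alpha> i * inner (dk a (xs j)) (kx (xs i))) + (\<Sum>i<n. \<Sum>b\<in>UNIV. \<beta> b i * inner (dk a (xs j)) (dk b (xs i)))"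
    by (simp add: f_ab_def inner_add_right inner_sum_right)
  also have "\<dots> = (\<Sum>i<n. Dmat k xs a j i * \<alpha> i) + (\<Sum>i<n. \<Sum>b\<in>UNIV. Lmat k xs a b j i * \<beta> b i)"
  proof (intro arg_cong2[where f="(+)"] sum.cong refl)
    fix i assume i: "i \<in> {..<n}"
    have "inner (dk a (xs j)) (kx (xs i)) = Dmat k xs a j i"
      by (subst inner_commute) (rule bf(2)[OF j], use i in simp)
    then show "\<alpha> i * inner (dk a (xs j)) (kx (xs i)) = Dmat k xs a j i * \<alpha> i" by simp
  next
    fix i b assume i: "i \<in> {..<n}"
    show "\<beta> b i * inner (dk a (xs j)) (dk b (xs i)) = Lmat k xs a b j i * \<beta> b i"
      using bf(3)[OF j, of i a b] i by simp
  qed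
  also have "\<dots> = gradvec k n xs \<alpha> \<beta> a j"
    using sum.swap[of "\<lambda>i b. Lmat k xs a b j i * \<beta> b i" UNIV "{..<n}"] by (simp add: gradvec_def)
  finally show "partial a (ev (f_ab kx dk n xs \<alpha> \<beta>)) (xs j) = gradvec k n xs \<alpha> \<beta> a j" .
qed

lemma norm_fact:
  assumes X: "open X" and sk: "sym_psd_kernel X k" and rk: "is_rkhs X k ev kx dk"
    and xs: "\<forall>i<(n::nat). xs i \<in> X"
  shows "(norm (f_ab kx dk n xs \<alpha> \<beta>))^2 = J3 k n xs \<alpha> \<beta>"
proof -
  note bf = basic_facts[OF X sk rk xs]
  define A where "A = (\<Sum>i<n. \<alpha> i *\<^sub>R kx (xs i))"
  define B where "B = (\<Sum>i<n. \<Sum>a\<in>UNIV. \<beta> a i *\<^sub>R dk a (xs i))"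
  have f: "f_ab kx dk n xs \<alpha> \<beta> = A + B" by (simp add: f_ab_def A_def B_def)
  have AA: "inner A A = (\<Sum>i<n. \<Sum>j<n. \<alpha> i * Kmat k xs i j * \<alpha> j)"
    unfolding A_def apply (simp add: inner_sum_left inner_sum_right sum_distrib_left bf mult_ac)
    apply (subst sum.swap) apply (simp add: mult_ac) done
  have AB: "inner A B = (\<Sum>a\<in>UNIV. \<Sum>i<n. (\<Sum>j<n. Dmat k xs a i j * \<alpha> j) * \<beta> a i)"
  proof -
    have "inner A B = (\<Sum>i<n. \<Sum>a\<in>UNIV. \<Sum>j<n. Dmat k xs a i j * \<alpha> j * \<beta> a i)"
      unfolding A_def B_def by (simp add: inner_sum_left inner_sum_right sum_distrib_left bf mult_ac)
    also have "\<dots> = (\<Sum>a\<in>UNIV. \<Sum>i<n. \<Sum>j<n. Dmat k xs a i j * \<alpha> j * \<beta> a i)"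
      by (rule sum.swap)
    finally show ?thesis by (simp add: sum_distrib_right)
  qed
  have BB: "inner B B = (\<Sum>a\<in>UNIV. \<Sum>i<n. \<Sum>b\<in>UNIV. \<Sum>j<n. \<beta> a i * Lmat k xs a b i j * \<beta> b j)"
  proof -
    have "inner B B = (\<Sum>i<n. \<Sum>a\<in>UNIV. \<Sum>j<n. \<Sum>b\<in>UNIV. \<beta> a i * Lmat k xs a b i j * \<beta> b j)"
    proof -
      have "inner B B = (\<Sum>i<n. \<Sum>a\<in>UNIV. \<beta> a i * inner (dk a (xs i)) B)"
        by (subst (1) B_def) (simp only: inner_sum_left inner_scaleR_left)
      also have "\<dots> = (\<Sum>i<n. \<Sum>a\<in>UNIV. \<Sum>j<n. \<Sum>b\<in>UNIV. \<beta> a i * Lmat k xs a b i j * \<beta> b j)"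
      proof (intro sum.cong refl)
        fix i a assume i: "i \<in> {..<n}"
        have "inner (dk a (xs i)) B = (\<Sum>j<n. \<Sum>b\<in>UNIV. \<beta> b j * inner (dk a (xs i)) (dk b (xs j)))"
          unfolding B_def by (simp only: inner_sum_right inner_scaleR_right)
        also have "\<dots> = (\<Sum>j<n. \<Sum>b\<in>UNIV. \<beta> b j * Lmat k xs a b i j)"
          using i by (intro sum.cong refl) (simp add: bf)
        finally show "\<beta> a i * inner (dk a (xs i)) B = (\<Sum>j<n. \<Sum>b\<in>UNIV. \<beta> a i * Lmat k xs a b i j * \<beta> b j)"
          by (simp add: sum_distrib_left mult_ac)
      qed
      finally show ?thesis .
    qed
    also have "\<dots> = (\<Sum>a\<in>UNIV. \<Sum>i<n. \<Sum>b\<in>UNIV. \<Sum>j<n. \<beta> a i * Lmat k xs a b i j * \<beta> b j)"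
    proof -
      have "(\<Sum>i<n. \<Sum>a\<in>UNIV. \<Sum>j<n. \<Sum>b\<in>UNIV. \<beta> a i * Lmat k xs a b i j * \<beta> b j) = (\<Sum>a\<in>UNIV. \<Sum>i<n. \<Sum>j<n. \<Sum>b\<in>UNIV. \<beta> a i * Lmat k xs a b i j * \<beta> b j)"
        by (rule sum.swap)
      also have "\<dots> = (\<Sum>a\<in>UNIV. \<Sum>i<n. \<Sum>b\<in>UNIV. \<Sum>j<n. \<beta> a i * Lmat k xs a b i j * \<beta> b j)"
        by (rule sum.cong[OF refl], rule sum.cong[OF refl], rule sum.swap)
      finally show ?thesis .
    qed
    finally show ?thesis .
  qed
  have "(norm (A + B))^2 = inner A A + 2 * inner A B + inner B B"
    by (simp add: power2_norm_eq_inner inner_add_left inner_add_right inner_commute[of B A])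
  then show ?thesis using f AA AB BB by (simp add: J3_def)
qed

lemma f_ab_add: "f_ab kx dk n xs (\<lambda>i. \<alpha>1 i + \<alpha>2 i) (\<lambda>a i. \<beta>1 a i + \<beta>2 a i)
   = f_ab kx dk n xs \<alpha>1 \<beta>1 + f_ab kx dk n xs \<alpha>2 \<beta>2"
  by (simp add: f_ab_def scaleR_add_left sum.distrib algebra_simps)

lemma f_ab_scale: "f_ab kx dk n xs (\<lambda>i. c * \<alpha> i) (\<lambda>a i. c * \<beta> a i) = c *\<^sub>R f_ab kx dk n xs \<alpha> \<beta>"
  by (simp add: f_ab_def scaleR_add_right scaleR_sum_right)

lemma f_ab_zero: "f_ab kx dk n xs (\<lambda>i. 0) (\<lambda>a i. 0) = 0"
  by (simp add: f_ab_def)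

lemma f_ab_subspace: "subspace (range (\<lambda>(\<alpha>, \<beta>). f_ab kx dk n xs \<alpha> \<beta>))"
  unfolding subspace_def
proof (intro conjI ballI allI)
  show "0 \<in> range (\<lambda>(\<alpha>, \<beta>). f_ab kx dk n xs \<alpha> \<beta>)"
    using f_ab_zero by (metis (no_types, lifting) case_prod_conv rangeI)
next
  fix x y assume "x \<in> range (\<lambda>(\<alpha>, \<beta>). f_ab kx dk n xs \<alpha> \<beta>)" "y \<in> range (\<lambda>(\<alpha>, \<beta>). f_ab kx dk n xs \<alpha> \<beta>)"
  then obtain a1 b1 a2 b2 where "x = f_ab kx dk n xs a1 b1" "y = f_ab kx dk n xs a2 b2" by auto
  then show "x + y \<in> range (\<lambda>(\<alpha>, \<beta>). f_ab kx dk n xs \<alpha> \<beta>)"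
    using f_ab_add[of kx dk n xs a1 a2 b1 b2]
    by (metis (no_types, lifting) case_prod_conv rangeI)
next
  fix c x assume "x \<in> range (\<lambda>(\<alpha>, \<beta>). f_ab kx dk n xs \<alpha> \<beta>)"
  then obtain a1 b1 where "x = f_ab kx dk n xs a1 b1" by auto
  then show "c *\<^sub>R x \<in> range (\<lambda>(\<alpha>, \<beta>). f_ab kx dk n xs \<alpha> \<beta>)"
    using f_ab_scale[of kx dk n xs c a1 b1]
    by (metis (no_types, lifting) case_prod_conv rangeI)
qed

lemma gen_kx: "i < n \<Longrightarrow> kx (xs i) = f_ab kx dk n xs (\<lambda>j. if j = i then 1 else 0) (\<lambda>a j. 0)"
  by (simp add: f_ab_def if_distrib[of "\<lambda>c. c *\<^sub>R _"] cong: if_cong)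

lemma gen_dk: assumes "i < n" shows "dk b (xs i) = f_ab kx dk n xs (\<lambda>j. 0) (\<lambda>a j. if a = b \<and> j = i then 1 else 0)"
proof -
  have "(\<Sum>ia<n. \<Sum>a\<in>UNIV. (if a = b \<and> ia = i then 1 else 0) *\<^sub>R dk a (xs ia))
      = (\<Sum>ia<n. if ia = i then dk b (xs i) else 0)"
  proof (intro sum.cong refl)
    fix ia show "(\<Sum>a\<in>UNIV. (if a = b \<and> ia = i then 1 else 0) *\<^sub>R dk a (xs ia)) = (if ia = i then dk b (xs i) else 0)"
      by (cases "ia = i") (simp_all add: if_distrib[of "\<lambda>c. c *\<^sub>R _"] cong: if_cong)
  qed
  also have "\<dots> = dk b (xs i)" using assms by simp
  finally show ?thesis by (simp add: f_ab_def)
qed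

lemma projection:
  fixes f :: "'h::real_inner" and n :: nat
  shows "\<exists>\<alpha> \<beta>. (\<forall>j<n. inner (kx (xs j)) (f_ab kx dk n xs \<alpha> \<beta>) = inner (kx (xs j)) f)
     \<and> (\<forall>a. \<forall>j<n. inner (dk a (xs j)) (f_ab kx dk n xs \<alpha> \<beta>) = inner (dk a (xs j)) f)
     \<and> (norm (f_ab kx dk n xs \<alpha> \<beta>))^2 \<le> (norm f)^2"
proof -
  define G where "G = (\<lambda>i. kx (xs i)) ` {..<n} \<union> (\<lambda>(a, i). dk a (xs i)) ` (UNIV \<times> {..<n})"
  have "finite G" unfolding G_def by auto
  then obtain p where p: "p \<in> span G" "\<forall>s\<in>G. inner s (f - p) = 0"
    using proj_exists by blast
  have "G \<subseteq> range (\<lambda>(\<alpha>, \<beta>). f_ab kx dk n xs \<alpha> \<beta>)"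
  proof
    fix g assume "g \<in> G"
    then show "g \<in> range (\<lambda>(\<alpha>, \<beta>). f_ab kx dk n xs \<alpha> \<beta>)"
      unfolding G_def
    proof (elim UnE imageE)
      fix i assume "g = kx (xs i)" "i \<in> {..<n}"
      then show ?thesis using gen_kx[of i n kx xs dk]
        by (metis (no_types, lifting) case_prod_conv lessThan_iff rangeI)
    next
      fix x assume "g = (case x of (a, i) \<Rightarrow> dk a (xs i))" "x \<in> UNIV \<times> {..<n}"
      then obtain a i where "g = dk a (xs i)" "i < n" by auto
      then show ?thesis using gen_dk[of i n dk a xs kx]
        by (metis (no_types, lifting) case_prod_conv rangeI)
    qed
  qed
  then have "span G \<subseteq> range (\<lambda>(\<alpha>, \<beta>). f_ab kx dk n xs \<alpha> \<beta>)"
    using span_minimal f_ab_subspace by blast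
  then obtain \<alpha> \<beta> where pe: "p = f_ab kx dk n xs \<alpha> \<beta>" using p(1) by auto
  have o1: "\<forall>j<n. inner (kx (xs j)) (f - p) = 0" using p(2) by (auto simp: G_def)
  have o2: "\<forall>a. \<forall>j<n. inner (dk a (xs j)) (f - p) = 0"
  proof (intro allI impI)
    fix a j assume "j < n"
    then have "dk a (xs j) \<in> G" unfolding G_def by (intro UnI2 image_eqI[of _ _ "(a, j)"]) auto
    then show "inner (dk a (xs j)) (f - p) = 0" using p(2) by blast
  qed
  have pp: "inner p (f - p) = 0" using orth_span[OF p(1)] p(2) by auto
  have "(norm f)^2 = (norm p)^2 + (norm (f - p))^2"
  proof -
    have "f = p + (f - p)" by simp
    then have "(norm f)^2 = inner (p + (f - p)) (p + (f - p))" by (metis power2_norm_eq_inner)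
    also have "\<dots> = (norm p)^2 + (norm (f - p))^2 + 2 * inner p (f - p)"
      by (simp only: inner_add_left inner_add_right power2_norm_eq_inner inner_commute[of "f - p" p])
    finally show ?thesis using pp by simp
  qed
  then have "(norm p)^2 \<le> (norm f)^2" by simp
  then show ?thesis using o1 o2 pe
    by (intro exI[of _ \<alpha>] exI[of _ \<beta>]) (auto simp: inner_diff_right)
qed

lemma equiv_generic:
  fixes P :: "'h \<Rightarrow> real"
  assumes eq: "\<And>\<alpha> \<beta>. P (emb \<alpha> \<beta>) = Q \<alpha> \<beta>" and pr: "\<And>f. \<exists>\<alpha> \<beta>. P (emb \<alpha> \<beta>) \<le> P f"
    and nn: "\<And>f. 0 \<le> P f"
  shows "equivalent_problems P Q emb"
proof -
  have bP: "bdd_below (range P)" using nn by (auto intro: bdd_belowI[of _ 0])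
  have bQ: "bdd_below (range (\<lambda>pq. Q (fst pq) (snd pq)))"
  proof (rule bdd_belowI[of _ 0])
    fix x assume "x \<in> range (\<lambda>pq. Q (fst pq) (snd pq))"
    then obtain pq where "x = Q (fst pq) (snd pq)" by auto
    then show "0 \<le> x" using nn[of "emb (fst pq) (snd pq)"] eq[of "fst pq" "snd pq"] by simp
  qed
  have "(INF f. P f) \<le> (INF pq. Q (fst pq) (snd pq))"
  proof (rule cINF_greatest)
    fix pq :: "'a \<times> 'b"
    have "(INF f. P f) \<le> P (emb (fst pq) (snd pq))" by (rule cINF_lower[OF bP]) simp
    then show "(INF f. P f) \<le> Q (fst pq) (snd pq)" using eq by simp
  qed simp
  moreover have "(INF pq. Q (fst pq) (snd pq)) \<le> (INF f. P f)"
  proof (rule cINF_greatest)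
    fix f
    obtain \<alpha> \<beta> where ab: "P (emb \<alpha> \<beta>) \<le> P f" using pr by blast
    have "(INF pq. Q (fst pq) (snd pq)) \<le> Q (fst (\<alpha>, \<beta>)) (snd (\<alpha>, \<beta>))" by (rule cINF_lower[OF bQ]) simp
    then show "(INF pq. Q (fst pq) (snd pq)) \<le> P f" using ab eq by simp
  qed simp
  moreover have "(\<forall>\<alpha>' \<beta>'. Q \<alpha> \<beta> \<le> Q \<alpha>' \<beta>') \<longleftrightarrow> (\<forall>g. P (emb \<alpha> \<beta>) \<le> P g)" for \<alpha> \<beta>
  proof
    assume h: "\<forall>\<alpha>' \<beta>'. Q \<alpha> \<beta> \<le> Q \<alpha>' \<beta>'"
    show "\<forall>g. P (emb \<alpha> \<beta>) \<le> P g"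
    proof
      fix g obtain \<alpha>' \<beta>' where "P (emb \<alpha>' \<beta>') \<le> P g" using pr by blast
      moreover have "P (emb \<alpha> \<beta>) \<le> P (emb \<alpha>' \<beta>')" using h eq[of \<alpha> \<beta>] eq[of \<alpha>' \<beta>'] by simp
      ultimately show "P (emb \<alpha> \<beta>) \<le> P g" by linarith
    qed
  next
    assume "\<forall>g. P (emb \<alpha> \<beta>) \<le> P g"
    then show "\<forall>\<alpha>' \<beta>'. Q \<alpha> \<beta> \<le> Q \<alpha>' \<beta>'" by (simp add: eq[symmetric])
  qed
  ultimately show ?thesis unfolding equivalent_problems_def by auto
qed

lemma emp_pnorm_eq:
  assumes X: "open X" and sk: "sym_psd_kernel X k" and rk: "is_rkhs X k ev kx dk"
    and xs: "\<forall>i<(n::nat). xs i \<in> X"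
  shows "emp_pnorm ev n xs a (f_ab kx dk n xs \<alpha> \<beta>) = gnorm k n xs \<alpha> \<beta> a / sqrt (real n)"
    and "(emp_pnorm ev n xs a (f_ab kx dk n xs \<alpha> \<beta>))^2 = (\<Sum>j<n. (gradvec k n xs \<alpha> \<beta> a j)^2) / real n"
proof -
  have S: "(\<Sum>i<n. (partial a (ev (f_ab kx dk n xs \<alpha> \<beta>)) (xs i))^2) = (\<Sum>j<n. (gradvec k n xs \<alpha> \<beta> a j)^2)"
    by (intro sum.cong refl) (simp add: eval_facts(2)[OF X sk rk xs])
  show "emp_pnorm ev n xs a (f_ab kx dk n xs \<alpha> \<beta>) = gnorm k n xs \<alpha> \<beta> a / sqrt (real n)"
    unfolding emp_pnorm_def gnorm_def S by (simp add: real_sqrt_divide)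
  show "(emp_pnorm ev n xs a (f_ab kx dk n xs \<alpha> \<beta>))^2 = (\<Sum>j<n. (gradvec k n xs \<alpha> \<beta> a j)^2) / real n"
    unfolding emp_pnorm_def S by (simp add: sum_nonneg)
qed

theorem proposition2:
  fixes X :: "(real^'d::finite) set"
    and k :: "real^'d \<Rightarrow> real^'d \<Rightarrow> real"
    and ev :: "'h::{real_inner,complete_space} \<Rightarrow> real^'d \<Rightarrow> real"
    and kx :: "real^'d \<Rightarrow> 'h"
    and dk :: "'d \<Rightarrow> real^'d \<Rightarrow> 'h"
    and n :: nat
    and xs :: "nat \<Rightarrow> real^'d"
    and ys :: "nat \<Rightarrow> real"
    and P :: "'d set set"
    and \<mu> \<tau> \<nu> :: real
  assumes "open X"
    and "sym_psd_kernel X k"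
    and "C2_on (X \<times> X) (\<lambda>(s, r). k s r)"
    and "is_rkhs X k ev kx dk"
    and "\<forall>i<n. xs i \<in> X"
    and "partition_on UNIV P"
    and "0 \<le> \<mu>" and "\<mu> \<le> 1"
    and "0 \<le> \<tau>" and "0 \<le> \<nu>"
  shows "(\<forall>\<alpha> \<beta>. let f = f_ab kx dk n xs \<alpha> \<beta> in
            emp_loss ev n xs ys f = J1 k n xs ys \<alpha> \<beta> \<and>
            R_L ev n xs f = J2_L k n xs \<alpha> \<beta> \<and>
            R_GL ev n xs P f = J2_GL k n xs P \<alpha> \<beta> \<and>
            R_EN ev n xs \<mu> f = J2_EN k n xs \<mu> \<alpha> \<beta> \<and>
            (norm f)^2 = J3 k n xs \<alpha> \<beta>)
    \<and> equivalent_problems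
        (\<lambda>f. emp_loss ev n xs ys f + \<tau> * R_L ev n xs f + \<nu> * (norm f)^2)
        (\<lambda>\<alpha> \<beta>. J1 k n xs ys \<alpha> \<beta> + \<tau> * J2_L k n xs \<alpha> \<beta> + \<nu> * J3 k n xs \<alpha> \<beta>)
        (f_ab kx dk n xs)
    \<and> equivalent_problems
        (\<lambda>f. emp_loss ev n xs ys f + \<tau> * R_GL ev n xs P f + \<nu> * (norm f)^2)
        (\<lambda>\<alpha> \<beta>. J1 k n xs ys \<alpha> \<beta> + \<tau> * J2_GL k n xs P \<alpha> \<beta> + \<nu> * J3 k n xs \<alpha> \<beta>)
        (f_ab kx dk n xs)
    \<and> equivalent_problems
        (\<lambda>f. emp_loss ev n xs ys f + \<tau> * R_EN ev n xs \<mu> f + \<nu> * (norm f)^2)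
        (\<lambda>\<alpha> \<beta>. J1 k n xs ys \<alpha> \<beta> + \<tau> * J2_EN k n xs \<mu> \<alpha> \<beta> + \<nu> * J3 k n xs \<alpha> \<beta>)
        (f_ab kx dk n xs)"
proof -
  note X = assms(1) and sk = assms(2) and rk = assms(4) and xs = assms(5)
  have E1: "\<And>x f. x \<in> X \<Longrightarrow> inner (kx x) f = ev f x"
   and E3: "\<And>a x f. x \<in> X \<Longrightarrow> inner (dk a x) f = partial a (ev f) x"
    using rk by (auto simp: is_rkhs_def)
  have L: "emp_loss ev n xs ys (f_ab kx dk n xs \<alpha> \<beta>) = J1 k n xs ys \<alpha> \<beta>" for \<alpha> \<beta>
  proof -
    have "(\<Sum>i<n. (ys i - ev (f_ab kx dk n xs \<alpha> \<beta>) (xs i))^2)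
        = (\<Sum>j<n. (ys j - (\<Sum>i<n. Kmat k xs j i * \<alpha> i) - (\<Sum>a\<in>UNIV. \<Sum>i<n. Dmat k xs a i j * \<beta> a i))^2)"
      by (intro sum.cong refl) (simp only: eval_facts(1)[OF X sk rk xs] lessThan_iff diff_diff_eq)
    then show ?thesis by (simp add: emp_loss_def J1_def)
  qed
  note EP = emp_pnorm_eq[OF X sk rk xs]
  have RL: "R_L ev n xs (f_ab kx dk n xs \<alpha> \<beta>) = J2_L k n xs \<alpha> \<beta>" for \<alpha> \<beta>
    by (simp add: R_L_def J2_L_def EP(1) sum_divide_distrib)
  have RGL: "R_GL ev n xs P (f_ab kx dk n xs \<alpha> \<beta>) = J2_GL k n xs P \<alpha> \<beta>" for \<alpha> \<beta>
  proof -
    have "real (card g) * sqrt (\<Sum>a\<in>g. (emp_pnorm ev n xs a (f_ab kx dk n xs \<alpha> \<beta>))^2)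
       = (1 / sqrt (real n)) * (real (card g) * sqrt (\<Sum>a\<in>g. \<Sum>j<n. (gradvec k n xs \<alpha> \<beta> a j)^2))" for g
      by (simp add: EP(2) sum_divide_distrib[symmetric] real_sqrt_divide)
    then show ?thesis by (simp add: R_GL_def J2_GL_def sum_distrib_left)
  qed
  have REN: "R_EN ev n xs \<mu> (f_ab kx dk n xs \<alpha> \<beta>) = J2_EN k n xs \<mu> \<alpha> \<beta>" for \<alpha> \<beta>
  proof -
    have g2: "(gnorm k n xs \<alpha> \<beta> a)^2 = (\<Sum>j<n. (gradvec k n xs \<alpha> \<beta> a j)^2)" for a
      by (simp add: gnorm_def sum_nonneg)
    have s2: "(\<Sum>a\<in>UNIV. (emp_pnorm ev n xs a (f_ab kx dk n xs \<alpha> \<beta>))^2) = (\<Sum>a\<in>UNIV. (gnorm k n xs \<alpha> \<beta> a)^2) / real n"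
      by (simp only: EP(2) g2 sum_divide_distrib)
    have s1: "(\<Sum>a\<in>UNIV. emp_pnorm ev n xs a (f_ab kx dk n xs \<alpha> \<beta>)) = (\<Sum>a\<in>UNIV. gnorm k n xs \<alpha> \<beta> a) / sqrt (real n)"
      by (simp only: EP(1) sum_divide_distrib)
    show ?thesis
      unfolding R_EN_def J2_EN_def s1 s2 by (simp only: times_divide_eq_right times_divide_eq_left)
  qed
  have N: "(norm (f_ab kx dk n xs \<alpha> \<beta>))^2 = J3 k n xs \<alpha> \<beta>" for \<alpha> \<beta>
    by (rule norm_fact[OF X sk rk xs])
  have part1: "\<forall>\<alpha> \<beta>. let f = f_ab kx dk n xs \<alpha> \<beta> in
            emp_loss ev n xs ys f = J1 k n xs ys \<alpha> \<beta> \<and>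
            R_L ev n xs f = J2_L k n xs \<alpha> \<beta> \<and>
            R_GL ev n xs P f = J2_GL k n xs P \<alpha> \<beta> \<and>
            R_EN ev n xs \<mu> f = J2_EN k n xs \<mu> \<alpha> \<beta> \<and>
            (norm f)^2 = J3 k n xs \<alpha> \<beta>"
    using L RL RGL REN N by (simp add: Let_def)
  have proj: "\<exists>\<alpha> \<beta>. emp_loss ev n xs ys (f_ab kx dk n xs \<alpha> \<beta>) = emp_loss ev n xs ys f
      \<and> (\<forall>a. emp_pnorm ev n xs a (f_ab kx dk n xs \<alpha> \<beta>) = emp_pnorm ev n xs a f)
      \<and> (norm (f_ab kx dk n xs \<alpha> \<beta>))^2 \<le> (norm f)^2" for f
  proof -
    obtain \<alpha> \<beta> where ab: "\<forall>j<n. inner (kx (xs j)) (f_ab kx dk n xs \<alpha> \<beta>) = inner (kx (xs j)) f"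
      "\<forall>a. \<forall>j<n. inner (dk a (xs j)) (f_ab kx dk n xs \<alpha> \<beta>) = inner (dk a (xs j)) f"
      "(norm (f_ab kx dk n xs \<alpha> \<beta>))^2 \<le> (norm f)^2"
      using projection[where f=f and n=n and kx=kx and xs=xs and dk=dk] by blast
    have e1: "ev (f_ab kx dk n xs \<alpha> \<beta>) (xs j) = ev f (xs j)" if "j < n" for j
    proof -
      have x: "xs j \<in> X" using xs that by simp
      have "ev (f_ab kx dk n xs \<alpha> \<beta>) (xs j) = inner (kx (xs j)) (f_ab kx dk n xs \<alpha> \<beta>)"
        by (rule E1[OF x, symmetric])
      also have "\<dots> = inner (kx (xs j)) f" using ab(1) that by simp
      also have "\<dots> = ev f (xs j)" by (rule E1[OF x])
      finally show ?thesis .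
    qed
    have e2: "partial a (ev (f_ab kx dk n xs \<alpha> \<beta>)) (xs j) = partial a (ev f) (xs j)" if "j < n" for a j
    proof -
      have x: "xs j \<in> X" using xs that by simp
      have "partial a (ev (f_ab kx dk n xs \<alpha> \<beta>)) (xs j) = inner (dk a (xs j)) (f_ab kx dk n xs \<alpha> \<beta>)"
        by (rule E3[OF x, symmetric])
      also have "\<dots> = inner (dk a (xs j)) f" using ab(2) that by simp
      also have "\<dots> = partial a (ev f) (xs j)" by (rule E3[OF x])
      finally show ?thesis .
    qed
    have l1: "emp_loss ev n xs ys (f_ab kx dk n xs \<alpha> \<beta>) = emp_loss ev n xs ys f"
      unfolding emp_loss_def by (intro arg_cong2[where f="(/)"] sum.cong refl) (simp add: e1)
    have l2: "emp_pnorm ev n xs a (f_ab kx dk n xs \<alpha> \<beta>) = emp_pnorm ev n xs a f" for a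
      unfolding emp_pnorm_def by (intro arg_cong[where f=sqrt] arg_cong2[where f="(/)"] sum.cong refl) (simp add: e2)
    show ?thesis by (rule exI[of _ \<alpha>], rule exI[of _ \<beta>], intro conjI allI l1 l2 ab(3))
  qed
  have lnn: "0 \<le> emp_loss ev n xs ys f" for f by (simp add: emp_loss_def sum_nonneg)
  have pnn: "0 \<le> emp_pnorm ev n xs a f" for a f by (simp add: emp_pnorm_def sum_nonneg)
  have eqL: "equivalent_problems
        (\<lambda>f. emp_loss ev n xs ys f + \<tau> * R_L ev n xs f + \<nu> * (norm f)^2)
        (\<lambda>\<alpha> \<beta>. J1 k n xs ys \<alpha> \<beta> + \<tau> * J2_L k n xs \<alpha> \<beta> + \<nu> * J3 k n xs \<alpha> \<beta>)
        (f_ab kx dk n xs)"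
  proof (rule equiv_generic)
    fix f
    obtain \<alpha> \<beta> where ab: "emp_loss ev n xs ys (f_ab kx dk n xs \<alpha> \<beta>) = emp_loss ev n xs ys f"
      "\<forall>a. emp_pnorm ev n xs a (f_ab kx dk n xs \<alpha> \<beta>) = emp_pnorm ev n xs a f"
      "(norm (f_ab kx dk n xs \<alpha> \<beta>))^2 \<le> (norm f)^2" using proj by blast
    show "\<exists>\<alpha> \<beta>. emp_loss ev n xs ys (f_ab kx dk n xs \<alpha> \<beta>) + \<tau> * R_L ev n xs (f_ab kx dk n xs \<alpha> \<beta>) + \<nu> * (norm (f_ab kx dk n xs \<alpha> \<beta>))^2
        \<le> emp_loss ev n xs ys f + \<tau> * R_L ev n xs f + \<nu> * (norm f)^2"
    proof (intro exI[of _ \<alpha>] exI[of _ \<beta>])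
      have r: "R_L ev n xs (f_ab kx dk n xs \<alpha> \<beta>) = R_L ev n xs f" by (simp only: R_L_def ab(2))
      have "\<nu> * (norm (f_ab kx dk n xs \<alpha> \<beta>))^2 \<le> \<nu> * (norm f)^2" by (rule mult_left_mono[OF ab(3) assms(10)])
      then show "emp_loss ev n xs ys (f_ab kx dk n xs \<alpha> \<beta>) + \<tau> * R_L ev n xs (f_ab kx dk n xs \<alpha> \<beta>) + \<nu> * (norm (f_ab kx dk n xs \<alpha> \<beta>))^2
        \<le> emp_loss ev n xs ys f + \<tau> * R_L ev n xs f + \<nu> * (norm f)^2" unfolding r ab(1) by linarith
    qed
    show "0 \<le> emp_loss ev n xs ys f + \<tau> * R_L ev n xs f + \<nu> * (norm f)^2"
    proof -
      have h: "0 \<le> R_L ev n xs f" unfolding R_L_def by (intro sum_nonneg pnn)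
      show ?thesis by (intro add_nonneg_nonneg mult_nonneg_nonneg lnn h assms(9) assms(10) zero_le_power2)
    qed
  qed (simp add: L RL N)
  have eqGL: "equivalent_problems
        (\<lambda>f. emp_loss ev n xs ys f + \<tau> * R_GL ev n xs P f + \<nu> * (norm f)^2)
        (\<lambda>\<alpha> \<beta>. J1 k n xs ys \<alpha> \<beta> + \<tau> * J2_GL k n xs P \<alpha> \<beta> + \<nu> * J3 k n xs \<alpha> \<beta>)
        (f_ab kx dk n xs)"
  proof (rule equiv_generic)
    fix f
    obtain \<alpha> \<beta> where ab: "emp_loss ev n xs ys (f_ab kx dk n xs \<alpha> \<beta>) = emp_loss ev n xs ys f"
      "\<forall>a. emp_pnorm ev n xs a (f_ab kx dk n xs \<alpha> \<beta>) = emp_pnorm ev n xs a f"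
      "(norm (f_ab kx dk n xs \<alpha> \<beta>))^2 \<le> (norm f)^2" using proj by blast
    show "\<exists>\<alpha> \<beta>. emp_loss ev n xs ys (f_ab kx dk n xs \<alpha> \<beta>) + \<tau> * R_GL ev n xs P (f_ab kx dk n xs \<alpha> \<beta>) + \<nu> * (norm (f_ab kx dk n xs \<alpha> \<beta>))^2
        \<le> emp_loss ev n xs ys f + \<tau> * R_GL ev n xs P f + \<nu> * (norm f)^2"
    proof (intro exI[of _ \<alpha>] exI[of _ \<beta>])
      have r: "R_GL ev n xs P (f_ab kx dk n xs \<alpha> \<beta>) = R_GL ev n xs P f" by (simp only: R_GL_def ab(2))
      have "\<nu> * (norm (f_ab kx dk n xs \<alpha> \<beta>))^2 \<le> \<nu> * (norm f)^2" by (rule mult_left_mono[OF ab(3) assms(10)])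
      then show "emp_loss ev n xs ys (f_ab kx dk n xs \<alpha> \<beta>) + \<tau> * R_GL ev n xs P (f_ab kx dk n xs \<alpha> \<beta>) + \<nu> * (norm (f_ab kx dk n xs \<alpha> \<beta>))^2
        \<le> emp_loss ev n xs ys f + \<tau> * R_GL ev n xs P f + \<nu> * (norm f)^2" unfolding r ab(1) by linarith
    qed
    show "0 \<le> emp_loss ev n xs ys f + \<tau> * R_GL ev n xs P f + \<nu> * (norm f)^2"
    proof -
      have h: "0 \<le> R_GL ev n xs P f" unfolding R_GL_def by (intro sum_nonneg mult_nonneg_nonneg real_sqrt_ge_zero zero_le_power2) simp
      show ?thesis by (intro add_nonneg_nonneg mult_nonneg_nonneg lnn h assms(9) assms(10) zero_le_power2)
    qed
  qed (simp add: L RGL N)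
  have eqEN: "equivalent_problems
        (\<lambda>f. emp_loss ev n xs ys f + \<tau> * R_EN ev n xs \<mu> f + \<nu> * (norm f)^2)
        (\<lambda>\<alpha> \<beta>. J1 k n xs ys \<alpha> \<beta> + \<tau> * J2_EN k n xs \<mu> \<alpha> \<beta> + \<nu> * J3 k n xs \<alpha> \<beta>)
        (f_ab kx dk n xs)"
  proof (rule equiv_generic)
    fix f
    obtain \<alpha> \<beta> where ab: "emp_loss ev n xs ys (f_ab kx dk n xs \<alpha> \<beta>) = emp_loss ev n xs ys f"
      "\<forall>a. emp_pnorm ev n xs a (f_ab kx dk n xs \<alpha> \<beta>) = emp_pnorm ev n xs a f"
      "(norm (f_ab kx dk n xs \<alpha> \<beta>))^2 \<le> (norm f)^2" using proj by blast
    show "\<exists>\<alpha> \<beta>. emp_loss ev n xs ys (f_ab kx dk n xs \<alpha> \<beta>) + \<tau> * R_EN ev n xs \<mu> (f_ab kx dk n xs \<alpha> \<beta>) + \<nu> * (norm (f_ab kx dk n xs \<alpha> \<beta>))^2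
        \<le> emp_loss ev n xs ys f + \<tau> * R_EN ev n xs \<mu> f + \<nu> * (norm f)^2"
    proof (intro exI[of _ \<alpha>] exI[of _ \<beta>])
      have r: "R_EN ev n xs \<mu> (f_ab kx dk n xs \<alpha> \<beta>) = R_EN ev n xs \<mu> f" by (simp only: R_EN_def ab(2))
      have "\<nu> * (norm (f_ab kx dk n xs \<alpha> \<beta>))^2 \<le> \<nu> * (norm f)^2" by (rule mult_left_mono[OF ab(3) assms(10)])
      then show "emp_loss ev n xs ys (f_ab kx dk n xs \<alpha> \<beta>) + \<tau> * R_EN ev n xs \<mu> (f_ab kx dk n xs \<alpha> \<beta>) + \<nu> * (norm (f_ab kx dk n xs \<alpha> \<beta>))^2
        \<le> emp_loss ev n xs ys f + \<tau> * R_EN ev n xs \<mu> f + \<nu> * (norm f)^2" unfolding r ab(1) by linarith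
    qed
    have h: "0 \<le> R_EN ev n xs \<mu> f"
      unfolding R_EN_def using assms(7,8) by (intro add_nonneg_nonneg mult_nonneg_nonneg sum_nonneg pnn zero_le_power2) simp_all
    show "0 \<le> emp_loss ev n xs ys f + \<tau> * R_EN ev n xs \<mu> f + \<nu> * (norm f)^2"
      by (intro add_nonneg_nonneg mult_nonneg_nonneg lnn h assms(9) assms(10) zero_le_power2)
  qed (simp add: L REN N)
  show ?thesis by (rule conjI[OF part1 conjI[OF eqL conjI[OF eqGL eqEN]]])
qed

end
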